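(* Let $E=\{1,2,\ldots,D\}$ be a finite state space and let $(J_n,T_n)_{n\in\mathbb{N}}$ be random variables on a probability space $(\Omega,\mathcal{F},\mathbb{P})$ with $J_n\in E$, $T_n\in\mathbb{N}$, $T_0=0$, $T_n<T_{n+1}$, and age index $A_n=a+T_n$ for a fixed initial age $a$. Assume that $(J_n,T_n,A_n)$ is a non-homogeneous age-indexed Markov renewal process, i.e. the conditional distribution of $(J_{n+1},T_{n+1})$ given the whole past $\sigma(J_h,T_h,A_h,\ h\le n)$ depends only on $(J_n,T_n,A_n)$, through the kernel $$ {}^{b}Q_{ij}(s;t)=\mathbb{P}[J_{n+1}=j,\,T_{n+1}\le t\mid J_n=i,\,T_n=s,\,A_n=b],\qquad b=a+s. $$ Put ${}^{b}q_{ij}(s;t)={}^{b}Q_{ij}(s;t)-{}^{b}Q_{ij}(s;t-1)$ for $t>s$ and ${}^{b}q_{ij}(s;s)=0$, and ${}^{b}\overline{H}_i(s;t)=1-\sum_{j\in E}{}^{b}Q_{ij}(s;t)$. Let $N(t)=\sup\{n:T_n\le t\}$, $Z(t)=J_{N(t)}$, $B(t)=t-T_{N(t)}$, and for integers $0\le u\le s\le t$, $u'\ge 0$, $i,j\in E$ define $$ {}^{a+s-u}\phi_{ij}(u,s;u',t)=\mathbb{P}\big[Z(t)=j,\,B(t)=u'\mid Z(s)=i,\,B(s)=u,\,A_{N(s)}=a+T_{N(s)}\big] $$ (whenever ${}^{a+s-u}\overline{H}_i(s-u;s)>0$). Then $$ {}^{a+s-u}\phi_{ij}(u,s;u',t)=1_{\{i=j\}}1_{\{u'=t-s+u\}}\frac{{}^{a+s-u}\overline{H}_i(s-u;t)}{{}^{a+s-u}\overline{H}_i(s-u;s)}+\sum_{k\in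 E}\sum_{\theta=s+1}^{t-u'}\frac{{}^{a+s-u}q_{ik}(s-u;\theta)}{{}^{a+s-u}\overline{H}_i(s-u;s)}\;{}^{a+\theta}\phi_{kj}(0,\theta;u',t). $$
   Context: Here $J_n$ is the (health) state entered at the $n$-th transition and $T_n$ its time; $Z(t)$ is the age-indexed semi-Markov chain, $B(t)$ the backward recurrence time (time elapsed since the last transition), and the left superscript on $Q$, $q$, $\overline{H}$, $\phi$ denotes the age of the individual at the time of the last transition (entrance into the current state). Thus ${}^{b}q_{ij}(s;t)=\mathbb{P}[J_{n+1}=j,T_{n+1}=t\mid J_n=i,T_n=s,A_n=b]$ and ${}^{b}\overline{H}_i(s;t)=\mathbb{P}[T_{n+1}>t\mid J_n=i,T_n=s,A_n=b]$ with $b=a+s$. *)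

theory Defs
  imports "HOL-Probability.Probability"
begin

definition NN :: "(nat \<Rightarrow> 'w \<Rightarrow> nat) \<Rightarrow> nat \<Rightarrow> 'w \<Rightarrow> nat" where
  "NN T t \<omega> = Max {n. T n \<omega> \<le> t}"

definition ZZ :: "(nat \<Rightarrow> 'w \<Rightarrow> nat) \<Rightarrow> (nat \<Rightarrow> 'w \<Rightarrow> nat) \<Rightarrow> nat \<Rightarrow> 'w \<Rightarrow> nat" where
  "ZZ J T t \<omega> = J (NN T t \<omega>) \<omega>"

definition BB :: "(nat \<Rightarrow> 'w \<Rightarrow> nat) \<Rightarrow> nat \<Rightarrow> 'w \<Rightarrow> nat" where
  "BB T t \<omega> = t - T (NN T t \<omega>) \<omega>"

definition AA :: "nat \<Rightarrow> (nat \<Rightarrow> 'w \<Rightarrow> nat) \<Rightarrow> nat \<Rightarrow> 'w \<Rightarrow> nat" where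
  "AA a T n \<omega> = a + T n \<omega>"

text \<open>Kernel Q: arguments are (age b) (state i) (state j) (time s) (time t),
  i.e. Q b i j s t = ^bQ_ij(s;t).  Derived quantities:\<close>
definition qk :: "(nat \<Rightarrow> nat \<Rightarrow> nat \<Rightarrow> nat \<Rightarrow> nat \<Rightarrow> real) \<Rightarrow> nat \<Rightarrow> nat \<Rightarrow> nat \<Rightarrow> nat \<Rightarrow> nat \<Rightarrow> real" where
  "qk Q b i j s t = (if s < t then Q b i j s t - Q b i j s (t - 1) else 0)"

definition Hbar :: "nat \<Rightarrow> (nat \<Rightarrow> nat \<Rightarrow> nat \<Rightarrow> nat \<Rightarrow> nat \<Rightarrow> real) \<Rightarrow> nat \<Rightarrow> nat \<Rightarrow> nat \<Rightarrow> nat \<Rightarrow> real" where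
  "Hbar D Q b i s t = 1 - (\<Sum>j\<in>{1..D}. Q b i j s t)"

text \<open>^b phi_ij(u,s;u',t) = P[Z(t)=j, B(t)=u' | Z(s)=i, B(s)=u, A_{N(s)} = b]
  (with b = a+s-u = a + T_{N(s)} on the conditioning event).\<close>
definition phi :: "'w measure \<Rightarrow> nat \<Rightarrow> (nat \<Rightarrow> 'w \<Rightarrow> nat) \<Rightarrow> (nat \<Rightarrow> 'w \<Rightarrow> nat)
    \<Rightarrow> nat \<Rightarrow> nat \<Rightarrow> nat \<Rightarrow> nat \<Rightarrow> nat \<Rightarrow> nat \<Rightarrow> nat \<Rightarrow> real" where
  "phi M a J T b i j u s u' t =
     cond_prob M (\<lambda>\<omega>. ZZ J T t \<omega> = j \<and> BB T t \<omega> = u')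
                 (\<lambda>\<omega>. ZZ J T s \<omega> = i \<and> BB T s \<omega> = u \<and> AA a T (NN T s \<omega>) \<omega> = b)"

end

theory Submission imports Defs begin

locale mrp = prob_space M for M :: "'w measure" +
  fixes D a :: nat and J T :: "nat \<Rightarrow> 'w \<Rightarrow> nat"
    and Q :: "nat \<Rightarrow> nat \<Rightarrow> nat \<Rightarrow> nat \<Rightarrow> nat \<Rightarrow> real"
    and j u' t :: nat
  assumes measJ[measurable]: "\<And>n. J n \<in> measurable M (count_space UNIV)"
    and measT[measurable]: "\<And>n. T n \<in> measurable M (count_space UNIV)"
    and Jrange: "\<And>n \<omega>. \<omega> \<in> space M \<Longrightarrow> J n \<omega> \<in> {1..D}"
    and T0: "\<And>\<omega>. \<omega> \<in> space M \<Longrightarrow> T 0 \<omega> = 0"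
    and Tmono: "\<And>n \<omega>. \<omega> \<in> space M \<Longrightarrow> T n \<omega> < T (Suc n) \<omega>"
    and MRP: "\<And>n js ts k r.
       k \<in> {1..D} \<Longrightarrow>
       \<P>(\<omega> in M. \<forall>h\<le>n. J h \<omega> = js h \<and> T h \<omega> = ts h \<and> AA a T h \<omega> = a + ts h) > 0 \<Longrightarrow>
       cond_prob M (\<lambda>\<omega>. J (Suc n) \<omega> = k \<and> T (Suc n) \<omega> \<le> r)
                   (\<lambda>\<omega>. \<forall>h\<le>n. J h \<omega> = js h \<and> T h \<omega> = ts h \<and> AA a T h \<omega> = a + ts h)
         = Q (a + ts n) (js n) k (ts n) r"
begin

lemma T_strict: "\<omega> \<in> space M \<Longrightarrow> m < n \<Longrightarrow> T m \<omega> < T n \<omega>"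
  using lift_Suc_mono_less[of "\<lambda>n. T n \<omega>"] Tmono by blast

lemma T_mono: "\<omega> \<in> space M \<Longrightarrow> m \<le> n \<Longrightarrow> T m \<omega> \<le> T n \<omega>"
  using T_strict[of \<omega> m n] by (cases "m = n") auto

lemma T_ge: "\<omega> \<in> space M \<Longrightarrow> n \<le> T n \<omega>"
proof (induction n)
  case 0 then show ?case by simp
next
  case (Suc n) then show ?case using Tmono[of \<omega> n] by simp
qed

lemma NN_eq: assumes "\<omega> \<in> space M" "T m \<omega> \<le> s" "s < T (Suc m) \<omega>"
  shows "NN T s \<omega> = m"
proof -
  have "{n. T n \<omega> \<le> s} = {..m}"
  proof (intro set_eqI iffI)
    fix n assume "n \<in> {n. T n \<omega> \<le> s}"
    then have "T n \<omega> \<le> s" by simp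
    show "n \<in> {..m}"
    proof (rule ccontr)
      assume "n \<notin> {..m}" then have "Suc m \<le> n" by simp
      then have "T (Suc m) \<omega> \<le> T n \<omega>" using T_mono assms(1) by blast
      then show False using assms \<open>T n \<omega> \<le> s\<close> by simp
    qed
  next
    fix n assume "n \<in> {..m}"
    then show "n \<in> {n. T n \<omega> \<le> s}" using T_mono[OF assms(1), of n m] assms by simp
  qed
  then show ?thesis unfolding NN_def by (metis Max_eqI atMost_iff finite_atMost order_refl)
qed

lemma NN_prop: assumes "\<omega> \<in> space M"
  shows "T (NN T s \<omega>) \<omega> \<le> s \<and> s < T (Suc (NN T s \<omega>)) \<omega>"
proof -
  let ?S = "{n. T n \<omega> \<le> s}"
  have fin: "finite ?S"
    by (rule finite_subset[of _ "{..s}"]) (auto dest: order_trans[OF T_ge[OF assms]])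
  have ne: "0 \<in> ?S" using T0[OF assms] by simp
  have "NN T s \<omega> \<in> ?S" unfolding NN_def using fin ne Max_in by blast
  moreover have "Suc (NN T s \<omega>) \<notin> ?S" unfolding NN_def using fin ne Max_ge
    by (metis Suc_n_not_le_n)
  ultimately show ?thesis by simp
qed

lemma NN_meas[measurable]: "NN T s \<in> measurable M (count_space UNIV)"
proof -
  have "NN T s -` {m} \<inter> space M = {\<omega>\<in>space M. T m \<omega> \<le> s \<and> s < T (Suc m) \<omega>}" for m
    using NN_eq NN_prop by auto
  moreover have "{\<omega>\<in>space M. T m \<omega> \<le> s \<and> s < T (Suc m) \<omega>} \<in> sets M" for m
    by measurable
  ultimately show ?thesis
    by (subst measurable_count_space_eq2_countable) auto
qed

lemma ZZ_meas[measurable]: "ZZ J T s \<in> measurable M (count_space UNIV)"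
  unfolding ZZ_def by (rule measurable_compose_countable[OF measJ NN_meas])

lemma TNN_meas[measurable]: "(\<lambda>\<omega>. T (NN T s \<omega>) \<omega>) \<in> measurable M (count_space UNIV)"
  by (rule measurable_compose_countable[OF measT NN_meas])

lemma BB_meas[measurable]: "BB T s \<in> measurable M (count_space UNIV)"
  unfolding BB_def by measurable

lemma AANN_meas[measurable]: "(\<lambda>\<omega>. AA a T (NN T s \<omega>) \<omega>) \<in> measurable M (count_space UNIV)"
  unfolding AA_def by measurable

definition C :: "(nat \<times> nat) list \<Rightarrow> 'w set" where
  "C xs = {\<omega>\<in>space M. \<forall>h<length xs. J h \<omega> = fst (xs!h) \<and> T h \<omega> = snd (xs!h)}"

lemma C_sets[measurable]: "C xs \<in> sets M"
  unfolding C_def by measurable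

lemma Int_sets: "A \<in> sets M \<Longrightarrow> {\<omega>\<in>space M. P \<omega>} \<in> sets M \<Longrightarrow> A \<inter> {\<omega>. P \<omega>} \<in> sets M"
proof -
  assume A: "A \<in> sets M" and P: "{\<omega>\<in>space M. P \<omega>} \<in> sets M"
  have eq: "A \<inter> {\<omega>. P \<omega>} = A \<inter> {\<omega>\<in>space M. P \<omega>}" using sets.sets_into_space[OF A] by auto
  show ?thesis using A P by (simp add: eq sets.Int)
qed

lemma sets1: "C xs \<inter> {\<omega>. J n \<omega> = k \<and> T n \<omega> \<le> r} \<in> sets M"
  by (rule Int_sets) measurable

lemma sets2: "C xs \<inter> {\<omega>. r < T n \<omega>} \<in> sets M"
  by (rule Int_sets) measurable

lemma C_append: "C (xs @ [(k, r)]) = C xs \<inter> {\<omega>. J (length xs) \<omega> = k \<and> T (length xs) \<omega> = r}"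
  unfolding C_def by (auto simp: nth_append less_Suc_eq)

lemma MRPu:
  assumes xs: "xs \<noteq> []" and k: "k \<in> {1..D}"
  shows "measure M (C xs \<inter> {\<omega>. J (length xs) \<omega> = k \<and> T (length xs) \<omega> \<le> r})
       = measure M (C xs) * Q (a + snd (last xs)) (fst (last xs)) k (snd (last xs)) r"
proof -
  define n where "n = length xs - 1"
  have len: "length xs = Suc n" using xs n_def by simp
  have lst: "last xs = xs ! n" using xs n_def by (simp add: last_conv_nth)
  have Ceq: "{\<omega>\<in>space M. \<forall>h\<le>n. J h \<omega> = fst (xs!h) \<and> T h \<omega> = snd (xs!h) \<and> AA a T h \<omega> = a + snd (xs!h)} = C xs"
    unfolding C_def AA_def len by (auto simp: less_Suc_eq_le)
  have Ceq2: "{\<omega>\<in>space M. (J (Suc n) \<omega> = k \<and> T (Suc n) \<omega> \<le> r) \<and> (\<forall>h\<le>n. J h \<omega> = fst (xs!h) \<and> T h \<omega> = snd (xs!h) \<and> AA a T h \<omega> = a + snd (xs!h))}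
     = C xs \<inter> {\<omega>. J (length xs) \<omega> = k \<and> T (length xs) \<omega> \<le> r}"
    unfolding C_def AA_def len by (auto simp: less_Suc_eq_le)
  show ?thesis
  proof (cases "measure M (C xs) > 0")
    case True
    have "cond_prob M (\<lambda>\<omega>. J (Suc n) \<omega> = k \<and> T (Suc n) \<omega> \<le> r)
                   (\<lambda>\<omega>. \<forall>h\<le>n. J h \<omega> = fst (xs!h) \<and> T h \<omega> = snd (xs!h) \<and> AA a T h \<omega> = a + snd (xs!h))
         = Q (a + snd (xs!n)) (fst (xs!n)) k (snd (xs!n)) r"
      using MRP[OF k, of n "\<lambda>h. fst (xs!h)" "\<lambda>h. snd (xs!h)" r] True Ceq by simp
    then have "measure M (C xs \<inter> {\<omega>. J (length xs) \<omega> = k \<and> T (length xs) \<omega> \<le> r}) / measure M (C xs)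
       = Q (a + snd (last xs)) (fst (last xs)) k (snd (last xs)) r"
      unfolding cond_prob_def Ceq Ceq2 lst .
    then show ?thesis using True by (simp add: field_simps)
  next
    case False
    then have z: "measure M (C xs) = 0" using measure_nonneg[of M "C xs"] by linarith
    have "measure M (C xs \<inter> {\<omega>. J (length xs) \<omega> = k \<and> T (length xs) \<omega> \<le> r}) \<le> measure M (C xs)"
      by (rule finite_measure_mono) auto
    then show ?thesis using z measure_nonneg[of M "C xs \<inter> {\<omega>. J (length xs) \<omega> = k \<and> T (length xs) \<omega> \<le> r}"] by simp
  qed
qed

lemma qkU:
  assumes xs: "xs \<noteq> []" and k: "k \<in> {1..D}" and r: "snd (last xs) < r"
  shows "measure M (C (xs @ [(k, r)]))
       = measure M (C xs) * qk Q (a + snd (last xs)) (fst (last xs)) k (snd (last xs)) r"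
proof -
  let ?A = "C xs \<inter> {\<omega>. J (length xs) \<omega> = k \<and> T (length xs) \<omega> \<le> r}"
  let ?B = "C xs \<inter> {\<omega>. J (length xs) \<omega> = k \<and> T (length xs) \<omega> \<le> r - 1}"
  have eq: "C (xs @ [(k, r)]) = ?A - ?B" unfolding C_append using r by auto
  have "?A \<in> sets M" "?B \<in> sets M" by (auto intro!: sets1 sets2)
  moreover have "?B \<subseteq> ?A" by auto
  ultimately have "measure M (C (xs @ [(k, r)])) = measure M ?A - measure M ?B"
    unfolding eq by (rule finite_measure_Diff)
  also have "\<dots> = measure M (C xs) * qk Q (a + snd (last xs)) (fst (last xs)) k (snd (last xs)) r"
    unfolding MRPu[OF xs k] qk_def using r by (simp add: algebra_simps)
  finally show ?thesis .
qed

lemma HbarU: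
  assumes xs: "xs \<noteq> []"
  shows "measure M (C xs \<inter> {\<omega>. r < T (length xs) \<omega>})
       = measure M (C xs) * Hbar D Q (a + snd (last xs)) (fst (last xs)) (snd (last xs)) r"
proof -
  let ?A = "\<lambda>k. C xs \<inter> {\<omega>. J (length xs) \<omega> = k \<and> T (length xs) \<omega> \<le> r}"
  have eq: "C xs \<inter> {\<omega>. r < T (length xs) \<omega>} = C xs - (\<Union>k\<in>{1..D}. ?A k)"
    using Jrange by (auto simp: C_def)
  have s1: "(\<Union>k\<in>{1..D}. ?A k) \<in> sets M" by (rule sets.finite_UN) (auto intro!: sets1 sets2)
  have "measure M (\<Union>k\<in>{1..D}. ?A k) = (\<Sum>k\<in>{1..D}. measure M (?A k))"
    by (rule finite_measure_finite_Union) (auto intro!: sets1 sets2 simp: disjoint_family_on_def)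
  also have "\<dots> = (\<Sum>k\<in>{1..D}. measure M (C xs) * Q (a + snd (last xs)) (fst (last xs)) k (snd (last xs)) r)"
    by (rule sum.cong) (auto simp: MRPu[OF xs])
  finally have u: "measure M (\<Union>k\<in>{1..D}. ?A k) = measure M (C xs) * (\<Sum>k\<in>{1..D}. Q (a + snd (last xs)) (fst (last xs)) k (snd (last xs)) r)"
    by (simp add: sum_distrib_left)
  have "measure M (C xs \<inter> {\<omega>. r < T (length xs) \<omega>}) = measure M (C xs) - measure M (\<Union>k\<in>{1..D}. ?A k)"
    unfolding eq by (rule finite_measure_Diff) (use s1 in auto)
  then show ?thesis unfolding u Hbar_def by (simp add: algebra_simps)
qed

function g :: "nat \<Rightarrow> nat \<Rightarrow> real" where
  "g k \<theta> = (if k = j \<and> u' = t - \<theta> then Hbar D Q (a + \<theta>) k \<theta> t else 0)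
     + (\<Sum>k'\<in>{1..D}. \<Sum>\<theta>'\<in>{\<theta>+1..t-u'}. qk Q (a + \<theta>) k k' \<theta> \<theta>' * g k' \<theta>')"
  by pat_completeness auto
termination by (relation "Wellfounded.measure (\<lambda>(k, \<theta>). t - \<theta>)") auto

declare g.simps[simp del]

lemma g_zero: "\<theta> \<le> t \<Longrightarrow> t - u' < \<theta> \<Longrightarrow> g k \<theta> = 0"
  by (subst g.simps) auto

definition F :: "'w set" where
  "F = {\<omega>\<in>space M. ZZ J T t \<omega> = j \<and> BB T t \<omega> = u'}"

lemma F_sets[measurable]: "F \<in> sets M"
  unfolding F_def by measurable

lemma last_C: "xs \<noteq> [] \<Longrightarrow> last xs = (k, \<theta>) \<Longrightarrow> \<omega> \<in> C xs \<Longrightarrow>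
   J (length xs - 1) \<omega> = k \<and> T (length xs - 1) \<omega> = \<theta>"
  unfolding C_def by (auto simp: last_conv_nth)

lemma step:
  assumes xs: "xs \<noteq> []" and lst: "last xs = (k, \<theta>)" and r: "\<theta> \<le> r" "r \<le> t"
    and IH: "\<And>k' \<theta>'. k' \<in> {1..D} \<Longrightarrow> \<theta>' \<in> {r+1..t} \<Longrightarrow>
       measure M (C (xs @ [(k', \<theta>')]) \<inter> F) = measure M (C (xs @ [(k', \<theta>')])) * g k' \<theta>'"
  shows "measure M (C xs \<inter> {\<omega>. r < T (length xs) \<omega>} \<inter> F) = measure M (C xs) *
     ((if k = j \<and> u' = t - \<theta> then Hbar D Q (a + \<theta>) k \<theta> t else 0)
      + (\<Sum>k'\<in>{1..D}. \<Sum>\<theta>'\<in>{r+1..t}. qk Q (a + \<theta>) k k' \<theta> \<theta>' * g k' \<theta>'))"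
proof -
  define n where "n = length xs"
  have n1: "Suc (n - 1) = n" using xs n_def by (cases xs) auto
  let ?A = "C xs \<inter> {\<omega>. t < T n \<omega>} \<inter> F"
  let ?B = "\<lambda>p. C (xs @ [p]) \<inter> F"
  let ?P = "{1..D} \<times> {r+1..t}"
  have seteq: "C xs \<inter> {\<omega>. r < T n \<omega>} \<inter> F = ?A \<union> (\<Union>p\<in>?P. ?B p)"
  proof (intro set_eqI iffI)
    fix \<omega> assume w: "\<omega> \<in> C xs \<inter> {\<omega>. r < T n \<omega>} \<inter> F"
    then have sp: "\<omega> \<in> space M" by (auto simp: C_def)
    show "\<omega> \<in> ?A \<union> (\<Union>p\<in>?P. ?B p)"
    proof (cases "t < T n \<omega>")
      case True then show ?thesis using w by auto
    next
      case False
      then have "(J n \<omega>, T n \<omega>) \<in> ?P" using w Jrange[OF sp] by auto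
      moreover have "\<omega> \<in> ?B (J n \<omega>, T n \<omega>)" using w unfolding C_append n_def by auto
      ultimately show ?thesis by blast
    qed
  next
    fix \<omega> assume "\<omega> \<in> ?A \<union> (\<Union>p\<in>?P. ?B p)"
    then show "\<omega> \<in> C xs \<inter> {\<omega>. r < T n \<omega>} \<inter> F"
      unfolding n_def using r by (auto simp: C_append)
  qed
  have Asets: "?A \<in> sets M" by (rule sets.Int[OF sets2 F_sets])
  have Bsets: "?B p \<in> sets M" for p by auto
  have disj1: "?A \<inter> (\<Union>p\<in>?P. ?B p) = {}" unfolding n_def by (auto simp: C_append)
  have disj2: "disjoint_family_on ?B ?P" unfolding disjoint_family_on_def by (auto simp: C_append)
  have "measure M (C xs \<inter> {\<omega>. r < T n \<omega>} \<inter> F) = measure M ?A + measure M (\<Union>p\<in>?P. ?B p)"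
    unfolding seteq by (rule finite_measure_Union) (use Asets Bsets disj1 in auto)
  also have "measure M (\<Union>p\<in>?P. ?B p) = (\<Sum>p\<in>?P. measure M (?B p))"
    by (rule finite_measure_finite_Union) (use Bsets disj2 in auto)
  also have "\<dots> = (\<Sum>p\<in>?P. measure M (C xs) * (qk Q (a + \<theta>) k (fst p) \<theta> (snd p) * g (fst p) (snd p)))"
  proof (rule sum.cong)
    fix p assume p: "p \<in> ?P"
    obtain k' \<theta>' where pe: "p = (k', \<theta>')" by (cases p)
    have k': "k' \<in> {1..D}" and th': "\<theta>' \<in> {r+1..t}" using p pe by auto
    have "measure M (?B p) = measure M (C (xs @ [(k', \<theta>')])) * g k' \<theta>'" using IH[OF k' th'] pe by simp
    also have "\<dots> = measure M (C xs) * (qk Q (a + \<theta>) k k' \<theta> \<theta>' * g k' \<theta>')"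
      using qkU[OF xs k', of \<theta>'] lst th' r by simp
    finally show "measure M (?B p) = measure M (C xs) * (qk Q (a + \<theta>) k (fst p) \<theta> (snd p) * g (fst p) (snd p))"
      using pe by simp
  qed simp
  also have "\<dots> = measure M (C xs) * (\<Sum>k'\<in>{1..D}. \<Sum>\<theta>'\<in>{r+1..t}. qk Q (a + \<theta>) k k' \<theta> \<theta>' * g k' \<theta>')"
    by (simp add: sum_distrib_left sum.cartesian_product case_prod_beta)
  also have "measure M ?A = measure M (C xs) * (if k = j \<and> u' = t - \<theta> then Hbar D Q (a + \<theta>) k \<theta> t else 0)"
  proof -
    have "?A = (if k = j \<and> u' = t - \<theta> then C xs \<inter> {\<omega>. t < T n \<omega>} else {})"
    proof -
      have *: "\<omega> \<in> C xs \<Longrightarrow> t < T n \<omega> \<Longrightarrow> ZZ J T t \<omega> = k \<and> BB T t \<omega> = t - \<theta>" for \<omega>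
      proof -
        assume w: "\<omega> \<in> C xs" "t < T n \<omega>"
        then have sp: "\<omega> \<in> space M" by (auto simp: C_def)
        have l: "J (n - 1) \<omega> = k \<and> T (n - 1) \<omega> = \<theta>" using last_C[OF xs lst w(1)] n_def by simp
        have "NN T t \<omega> = n - 1" using NN_eq[OF sp, of "n - 1" t] l r w(2) n1 by simp
        then show ?thesis unfolding ZZ_def BB_def using l by simp
      qed
      show ?thesis using * by (auto simp: F_def C_def)
    qed
    then show ?thesis using HbarU[OF xs, of t] lst n_def by simp
  qed
  finally show ?thesis unfolding n_def by (simp add: algebra_simps)
qed

lemma future_aux:
  "t - \<theta> = d \<Longrightarrow> xs \<noteq> [] \<Longrightarrow> last xs = (k, \<theta>) \<Longrightarrow> \<theta> \<le> t \<Longrightarrow>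
   measure M (C xs \<inter> F) = measure M (C xs) * g k \<theta>"
proof (induction d arbitrary: xs k \<theta> rule: less_induct)
  case (less d)
  have IH: "measure M (C (xs @ [(k', \<theta>')]) \<inter> F) = measure M (C (xs @ [(k', \<theta>')])) * g k' \<theta>'"
    if "k' \<in> {1..D}" "\<theta>' \<in> {\<theta>+1..t}" for k' \<theta>'
    by (rule less.IH[of "t - \<theta>'"]) (use that less.prems in auto)
  have CT: "C xs \<inter> {\<omega>. \<theta> < T (length xs) \<omega>} = C xs"
  proof -
    have "\<theta> < T (length xs) \<omega>" if "\<omega> \<in> C xs" for \<omega>
    proof -
      have sp: "\<omega> \<in> space M" using that by (auto simp: C_def)
      have "T (length xs - 1) \<omega> = \<theta>" using last_C[OF less.prems(2,3) that] by simp
      moreover have "Suc (length xs - 1) = length xs" using less.prems(2) by (cases xs) auto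
      ultimately show ?thesis using Tmono[OF sp, of "length xs - 1"] by simp
    qed
    then show ?thesis by auto
  qed
  have "measure M (C xs \<inter> F) = measure M (C xs) *
     ((if k = j \<and> u' = t - \<theta> then Hbar D Q (a + \<theta>) k \<theta> t else 0)
      + (\<Sum>k'\<in>{1..D}. \<Sum>\<theta>'\<in>{\<theta>+1..t}. qk Q (a + \<theta>) k k' \<theta> \<theta>' * g k' \<theta>'))"
    using step[OF less.prems(2,3) order_refl less.prems(4) IH] CT by simp
  also have "(\<Sum>k'\<in>{1..D}. \<Sum>\<theta>'\<in>{\<theta>+1..t}. qk Q (a + \<theta>) k k' \<theta> \<theta>' * g k' \<theta>')
     = (\<Sum>k'\<in>{1..D}. \<Sum>\<theta>'\<in>{\<theta>+1..t-u'}. qk Q (a + \<theta>) k k' \<theta> \<theta>' * g k' \<theta>')"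
  proof (rule sum.cong[OF refl])
    fix k' assume "k' \<in> {1..D}"
    show "(\<Sum>\<theta>'\<in>{\<theta>+1..t}. qk Q (a + \<theta>) k k' \<theta> \<theta>' * g k' \<theta>')
       = (\<Sum>\<theta>'\<in>{\<theta>+1..t-u'}. qk Q (a + \<theta>) k k' \<theta> \<theta>' * g k' \<theta>')"
      by (rule sum.mono_neutral_right) (auto simp: g_zero)
  qed
  also have "(if k = j \<and> u' = t - \<theta> then Hbar D Q (a + \<theta>) k \<theta> t else 0)
      + (\<Sum>k'\<in>{1..D}. \<Sum>\<theta>'\<in>{\<theta>+1..t-u'}. qk Q (a + \<theta>) k k' \<theta> \<theta>' * g k' \<theta>') = g k \<theta>"
    by (rule g.simps[symmetric])
  finally show ?case .
qed

lemma future: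
  assumes "xs \<noteq> []" "last xs = (k, \<theta>)" "\<theta> \<le> t"
  shows "measure M (C xs \<inter> F) = measure M (C xs) * g k \<theta>"
  using future_aux[OF refl assms] .

definition E :: "nat \<Rightarrow> nat \<Rightarrow> nat \<Rightarrow> 'w set" where
  "E s u i = {\<omega>\<in>space M. ZZ J T s \<omega> = i \<and> BB T s \<omega> = u \<and> AA a T (NN T s \<omega>) \<omega> = a + s - u}"

definition S :: "nat \<Rightarrow> nat \<Rightarrow> nat \<Rightarrow> (nat \<times> nat) list set" where
  "S s u i = {xs. xs \<noteq> [] \<and> length xs \<le> Suc s \<and> set xs \<subseteq> {1..D} \<times> {0..s} \<and> last xs = (i, s - u)}"

definition Dx :: "nat \<Rightarrow> (nat \<times> nat) list \<Rightarrow> 'w set" where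
  "Dx s xs = C xs \<inter> {\<omega>. s < T (length xs) \<omega>}"

lemma E_sets[measurable]: "E s u i \<in> sets M"
  unfolding E_def by measurable

lemma Dx_sets[measurable]: "Dx s xs \<in> sets M"
  unfolding Dx_def by (rule sets2)

lemma S_finite: "finite (S s u i)"
  by (rule finite_subset[OF _ finite_lists_length_le[of "{1..D} \<times> {0..s}" "Suc s"]])
     (auto simp: S_def)

lemma E_decomp:
  assumes us: "u \<le> s"
  shows "E s u i = (\<Union>xs\<in>S s u i. Dx s xs)"
proof (intro set_eqI iffI)
  fix \<omega> assume w: "\<omega> \<in> E s u i"
  then have sp: "\<omega> \<in> space M" by (simp add: E_def)
  obtain m where m_def: "m = NN T s \<omega>" by simp
  have m: "T m \<omega> \<le> s" "s < T (Suc m) \<omega>" using NN_prop[OF sp, of s] m_def by auto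
  have Jm: "J m \<omega> = i" using w m_def by (simp add: E_def ZZ_def)
  have Tm: "T m \<omega> = s - u" using w m_def m(1) by (auto simp: E_def BB_def)
  define xs where "xs = map (\<lambda>h. (J h \<omega>, T h \<omega>)) [0..<Suc m]"
  have "m \<le> s" using T_ge[OF sp, of m] m by simp
  moreover have "set xs \<subseteq> {1..D} \<times> {0..s}"
  proof
    fix p assume "p \<in> set xs"
    then obtain h where h: "h < Suc m" "p = (J h \<omega>, T h \<omega>)" unfolding xs_def by (auto simp del: upt_Suc)
    have "T h \<omega> \<le> T m \<omega>" using T_mono[OF sp, of h m] h(1) by simp
    then show "p \<in> {1..D} \<times> {0..s}" using h(2) Jrange[OF sp, of h] m(1) by simp
  qed
  moreover have "last xs = (i, s - u)" unfolding xs_def using Tm Jm by simp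
  ultimately have "xs \<in> S s u i" unfolding S_def xs_def by simp
  moreover have "\<omega> \<in> Dx s xs" unfolding Dx_def C_def xs_def using sp m by (simp del: upt_Suc)
  ultimately show "\<omega> \<in> (\<Union>xs\<in>S s u i. Dx s xs)" by blast
next
  fix \<omega> assume "\<omega> \<in> (\<Union>xs\<in>S s u i. Dx s xs)"
  then obtain xs where xs: "xs \<in> S s u i" and w: "\<omega> \<in> Dx s xs" by blast
  have ne: "xs \<noteq> []" and lst: "last xs = (i, s - u)" using xs by (auto simp: S_def)
  have wc: "\<omega> \<in> C xs" and sp: "\<omega> \<in> space M" using w by (auto simp: Dx_def C_def)
  have l: "J (length xs - 1) \<omega> = i \<and> T (length xs - 1) \<omega> = s - u" using last_C[OF ne lst wc] .
  have n1: "Suc (length xs - 1) = length xs" using ne by (cases xs) auto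
  have "NN T s \<omega> = length xs - 1" using NN_eq[OF sp, of "length xs - 1" s] l w n1 by (simp add: Dx_def)
  then show "\<omega> \<in> E s u i" unfolding E_def ZZ_def BB_def AA_def using l sp us by simp
qed

lemma Dx_len:
  assumes "xs \<in> S s u i" "ys \<in> S s u i" "\<omega> \<in> Dx s xs" "\<omega> \<in> Dx s ys"
  shows "\<not> length xs < length ys"
proof
  assume lt: "length xs < length ys"
  have ne: "ys \<noteq> []" and lst: "last ys = (i, s - u)" using assms(2) by (auto simp: S_def)
  have wc: "\<omega> \<in> C ys" and sp: "\<omega> \<in> space M" using assms(4) by (auto simp: Dx_def C_def)
  have "T (length ys - 1) \<omega> = s - u" using last_C[OF ne lst wc] by simp
  moreover have "T (length xs) \<omega> \<le> T (length ys - 1) \<omega>" using T_mono[OF sp] lt by simp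
  ultimately have "T (length xs) \<omega> \<le> s" by simp
  then show False using assms(3) by (simp add: Dx_def)
qed

lemma Dx_disj: "disjoint_family_on (Dx s) (S s u i)"
  unfolding disjoint_family_on_def
proof (intro ballI impI)
  fix xs ys assume xs: "xs \<in> S s u i" and ys: "ys \<in> S s u i" and ne: "xs \<noteq> ys"
  show "Dx s xs \<inter> Dx s ys = {}"
  proof (rule ccontr)
    assume "Dx s xs \<inter> Dx s ys \<noteq> {}"
    then obtain \<omega> where w1: "\<omega> \<in> Dx s xs" and w2: "\<omega> \<in> Dx s ys" by blast
    have len: "length xs = length ys" using Dx_len[OF xs ys w1 w2] Dx_len[OF ys xs w2 w1] by simp
    have a: "\<forall>h<length xs. J h \<omega> = fst (xs!h) \<and> T h \<omega> = snd (xs!h)" using w1 by (simp add: Dx_def C_def)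
    have b: "\<forall>h<length ys. J h \<omega> = fst (ys!h) \<and> T h \<omega> = snd (ys!h)" using w2 by (simp add: Dx_def C_def)
    have "xs = ys"
    proof (rule nth_equalityI[OF len])
      fix h assume hl: "h < length xs"
      have "J h \<omega> = fst (xs!h)" "T h \<omega> = snd (xs!h)" using a hl by auto
      moreover have "J h \<omega> = fst (ys!h)" "T h \<omega> = snd (ys!h)" using b hl len by auto
      ultimately show "xs ! h = ys ! h" by (simp add: prod_eq_iff)
    qed
    then show False using ne by simp
  qed
qed

lemma sumE:
  assumes "u \<le> s"
  shows "measure M (E s u i) = (\<Sum>xs\<in>S s u i. measure M (Dx s xs))"
    and "measure M (E s u i \<inter> F) = (\<Sum>xs\<in>S s u i. measure M (Dx s xs \<inter> F))"
proof -
  show "measure M (E s u i) = (\<Sum>xs\<in>S s u i. measure M (Dx s xs))"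
    unfolding E_decomp[OF assms]
    by (rule finite_measure_finite_Union) (use S_finite Dx_disj in auto)
  have "E s u i \<inter> F = (\<Union>xs\<in>S s u i. Dx s xs \<inter> F)" unfolding E_decomp[OF assms] by blast
  moreover have "disjoint_family_on (\<lambda>xs. Dx s xs \<inter> F) (S s u i)"
    using Dx_disj unfolding disjoint_family_on_def by blast
  ultimately show "measure M (E s u i \<inter> F) = (\<Sum>xs\<in>S s u i. measure M (Dx s xs \<inter> F))"
    by (simp only:) (rule finite_measure_finite_Union, use S_finite in auto)
qed

lemma phi_eq: "b = a + s - u \<Longrightarrow> phi M a J T b i j u s u' t = measure M (E s u i \<inter> F) / measure M (E s u i)"
  unfolding phi_def cond_prob_def E_def F_def
  by (rule arg_cong2[where f="(/)"]; rule arg_cong[where f="measure M"]) auto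

lemma phi_theta:
  assumes k: "k \<in> {1..D}" and th: "\<theta> \<le> t" and pos: "measure M (E \<theta> 0 k) > 0"
  shows "phi M a J T (a + \<theta>) k j 0 \<theta> u' t = g k \<theta>"
proof -
  have DC: "Dx \<theta> xs = C xs" if "xs \<in> S \<theta> 0 k" for xs
  proof -
    have ne: "xs \<noteq> []" and lst: "last xs = (k, \<theta>)" using that by (auto simp: S_def)
    have "\<theta> < T (length xs) \<omega>" if w: "\<omega> \<in> C xs" for \<omega>
    proof -
      have sp: "\<omega> \<in> space M" using w by (auto simp: C_def)
      have "T (length xs - 1) \<omega> = \<theta>" using last_C[OF ne lst w] by simp
      moreover have "Suc (length xs - 1) = length xs" using ne by (cases xs) auto
      ultimately show ?thesis using Tmono[OF sp, of "length xs - 1"] by simp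
    qed
    then show ?thesis unfolding Dx_def by auto
  qed
  have fu: "measure M (C xs \<inter> F) = measure M (C xs) * g k \<theta>" if "xs \<in> S \<theta> 0 k" for xs
    using that th by (intro future) (auto simp: S_def)
  have e1: "measure M (E \<theta> 0 k) = (\<Sum>xs\<in>S \<theta> 0 k. measure M (C xs))"
    using sumE(1)[of 0 \<theta> k] DC by simp
  have e2: "measure M (E \<theta> 0 k \<inter> F) = (\<Sum>xs\<in>S \<theta> 0 k. measure M (C xs)) * g k \<theta>"
    using sumE(2)[of 0 \<theta> k] DC fu by (simp add: sum_distrib_right)
  show ?thesis using phi_eq[of "a + \<theta>" \<theta> 0 k] e1 e2 pos by simp
qed

lemma main:
  assumes i: "i \<in> {1..D}" and us: "u \<le> s" and st: "s \<le> t"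
    and Hpos: "Hbar D Q (a + s - u) i (s - u) s > 0"
    and cpos: "measure M (E s u i) > 0"
  shows "phi M a J T (a + s - u) i j u s u' t =
           (if i = j \<and> u' = t - s + u
            then Hbar D Q (a + s - u) i (s - u) t / Hbar D Q (a + s - u) i (s - u) s else 0)
         + (\<Sum>k\<in>{1..D}. \<Sum>\<theta>\<in>{s+1..t-u'}.
              qk Q (a + s - u) i k (s - u) \<theta> / Hbar D Q (a + s - u) i (s - u) s
              * phi M a J T (a + \<theta>) k j 0 \<theta> u' t)"
proof -
  have age: "a + s - u = a + (s - u)" using us by simp
  define Hs where "Hs = Hbar D Q (a + (s - u)) i (s - u) s"
  define Ht where "Ht = Hbar D Q (a + (s - u)) i (s - u) t"
  define ind where "ind = (if i = j \<and> u' = t - (s - u) then Ht else 0)"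
  define R where "R = ind + (\<Sum>k'\<in>{1..D}. \<Sum>\<theta>'\<in>{s+1..t}. qk Q (a + (s - u)) i k' (s - u) \<theta>' * g k' \<theta>')"
  define W where "W = (\<Sum>xs\<in>S s u i. measure M (C xs))"
  have lstS: "xs \<noteq> [] \<and> last xs = (i, s - u)" if "xs \<in> S s u i" for xs
    using that by (auto simp: S_def)
  have m1: "measure M (Dx s xs) = measure M (C xs) * Hs" if "xs \<in> S s u i" for xs
    using HbarU[of xs s] lstS[OF that] unfolding Dx_def Hs_def by simp
  have m2: "measure M (Dx s xs \<inter> F) = measure M (C xs) * R" if "xs \<in> S s u i" for xs
  proof -
    have ne: "xs \<noteq> []" and lst: "last xs = (i, s - u)" using lstS[OF that] by auto
    have "measure M (C xs \<inter> {\<omega>. s < T (length xs) \<omega>} \<inter> F) = measure M (C xs) * R"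
      unfolding R_def ind_def Ht_def
    proof (rule step[OF ne lst _ st])
      show "s - u \<le> s" by simp
      fix k' \<theta>' assume "k' \<in> {1..D}" "\<theta>' \<in> {s+1..t}"
      then show "measure M (C (xs @ [(k', \<theta>')]) \<inter> F) = measure M (C (xs @ [(k', \<theta>')])) * g k' \<theta>'"
        by (intro future) auto
    qed
    then show ?thesis unfolding Dx_def .
  qed
  have EM: "measure M (E s u i) = W * Hs"
    unfolding sumE(1)[OF us] W_def sum_distrib_right using m1 by (simp cong: sum.cong)
  have EF: "measure M (E s u i \<inter> F) = W * R"
    unfolding sumE(2)[OF us] W_def sum_distrib_right using m2 by (simp cong: sum.cong)
  have Hs: "Hs > 0" using Hpos age Hs_def by simp
  have W0: "W \<ge> 0" unfolding W_def by (simp add: sum_nonneg)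
  have "W \<noteq> 0" using cpos EM by auto
  then have Wpos: "W > 0" using W0 by simp
  have "\<exists>xs\<in>S s u i. measure M (C xs) \<noteq> 0"
  proof (rule ccontr)
    assume "\<not> (\<exists>xs\<in>S s u i. measure M (C xs) \<noteq> 0)"
    then have "W = 0" unfolding W_def by (intro sum.neutral) auto
    then show False using Wpos by simp
  qed
  then obtain xs0 where xs0a: "xs0 \<in> S s u i" "measure M (C xs0) \<noteq> 0" by blast
  have xs0: "xs0 \<in> S s u i" "measure M (C xs0) > 0"
    using xs0a measure_nonneg[of M "C xs0"] by (auto simp: less_le)
  have ne0: "xs0 \<noteq> []" and lst0: "last xs0 = (i, s - u)" using lstS[OF xs0(1)] by auto
  have trm: "qk Q (a + (s - u)) i k (s - u) \<theta> * phi M a J T (a + \<theta>) k j 0 \<theta> u' t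
      = qk Q (a + (s - u)) i k (s - u) \<theta> * g k \<theta>" if k: "k \<in> {1..D}" and th: "\<theta> \<in> {s+1..t-u'}" for k \<theta>
  proof (cases "measure M (E \<theta> 0 k) > 0")
    case True
    have "\<theta> \<le> t" using th by auto
    then show ?thesis using phi_theta[OF k _ True] by simp
  next
    case False
    then have z: "measure M (E \<theta> 0 k) = 0" using measure_nonneg[of M "E \<theta> 0 k"] by linarith
    have sub: "C (xs0 @ [(k, \<theta>)]) \<subseteq> E \<theta> 0 k"
    proof
      fix \<omega> assume w: "\<omega> \<in> C (xs0 @ [(k, \<theta>)])"
      then have sp: "\<omega> \<in> space M" by (simp add: C_def)
      have l: "J (length xs0) \<omega> = k" "T (length xs0) \<omega> = \<theta>" using w unfolding C_append by auto
      have "NN T \<theta> \<omega> = length xs0" using NN_eq[OF sp, of "length xs0" \<theta>] l Tmono[OF sp, of "length xs0"] by simp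
      then show "\<omega> \<in> E \<theta> 0 k" unfolding E_def ZZ_def BB_def AA_def using l sp by simp
    qed
    have "measure M (C (xs0 @ [(k, \<theta>)])) \<le> measure M (E \<theta> 0 k)"
      by (rule finite_measure_mono[OF sub]) simp
    then have "measure M (C (xs0 @ [(k, \<theta>)])) = 0" using z measure_nonneg[of M "C (xs0 @ [(k, \<theta>)])"] by simp
    then have "measure M (C xs0) * qk Q (a + (s - u)) i k (s - u) \<theta> = 0"
    proof -
      have "s - u < \<theta>" using th by auto
      then show ?thesis using qkU[OF ne0 k, of \<theta>] lst0 \<open>measure M (C (xs0 @ [(k, \<theta>)])) = 0\<close> by simp
    qed
    then have "qk Q (a + (s - u)) i k (s - u) \<theta> = 0" using xs0(2) by simp
    then show ?thesis by simp
  qed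
  have sumeq: "(\<Sum>k\<in>{1..D}. \<Sum>\<theta>\<in>{s+1..t-u'}.
              qk Q (a + (s - u)) i k (s - u) \<theta> / Hs * phi M a J T (a + \<theta>) k j 0 \<theta> u' t)
      = (\<Sum>k'\<in>{1..D}. \<Sum>\<theta>'\<in>{s+1..t}. qk Q (a + (s - u)) i k' (s - u) \<theta>' * g k' \<theta>') / Hs"
  proof -
    have "(\<Sum>k\<in>{1..D}. \<Sum>\<theta>\<in>{s+1..t-u'}.
              qk Q (a + (s - u)) i k (s - u) \<theta> / Hs * phi M a J T (a + \<theta>) k j 0 \<theta> u' t)
       = (\<Sum>k\<in>{1..D}. \<Sum>\<theta>\<in>{s+1..t-u'}. qk Q (a + (s - u)) i k (s - u) \<theta> * g k \<theta> / Hs)"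
    proof (rule sum.cong[OF refl])
      fix k assume k: "k \<in> {1..D}"
      show "(\<Sum>\<theta>\<in>{s+1..t-u'}. qk Q (a + (s - u)) i k (s - u) \<theta> / Hs * phi M a J T (a + \<theta>) k j 0 \<theta> u' t)
         = (\<Sum>\<theta>\<in>{s+1..t-u'}. qk Q (a + (s - u)) i k (s - u) \<theta> * g k \<theta> / Hs)"
      proof (rule sum.cong[OF refl])
        fix \<theta> assume th: "\<theta> \<in> {s+1..t-u'}"
        have "qk Q (a + (s - u)) i k (s - u) \<theta> / Hs * phi M a J T (a + \<theta>) k j 0 \<theta> u' t
           = (qk Q (a + (s - u)) i k (s - u) \<theta> * phi M a J T (a + \<theta>) k j 0 \<theta> u' t) / Hs" by simp
        also have "\<dots> = qk Q (a + (s - u)) i k (s - u) \<theta> * g k \<theta> / Hs" using trm[OF k th] by simp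
        finally show "qk Q (a + (s - u)) i k (s - u) \<theta> / Hs * phi M a J T (a + \<theta>) k j 0 \<theta> u' t
           = qk Q (a + (s - u)) i k (s - u) \<theta> * g k \<theta> / Hs" .
      qed
    qed
    also have "\<dots> = (\<Sum>k\<in>{1..D}. \<Sum>\<theta>\<in>{s+1..t-u'}. qk Q (a + (s - u)) i k (s - u) \<theta> * g k \<theta>) / Hs"
      by (simp add: sum_divide_distrib)
    also have "(\<Sum>k\<in>{1..D}. \<Sum>\<theta>\<in>{s+1..t-u'}. qk Q (a + (s - u)) i k (s - u) \<theta> * g k \<theta>)
       = (\<Sum>k\<in>{1..D}. \<Sum>\<theta>\<in>{s+1..t}. qk Q (a + (s - u)) i k (s - u) \<theta> * g k \<theta>)"
    proof (rule sum.cong[OF refl])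
      fix k assume "k \<in> {1..D}"
      show "(\<Sum>\<theta>\<in>{s+1..t-u'}. qk Q (a + (s - u)) i k (s - u) \<theta> * g k \<theta>)
         = (\<Sum>\<theta>\<in>{s+1..t}. qk Q (a + (s - u)) i k (s - u) \<theta> * g k \<theta>)"
        by (rule sum.mono_neutral_left) (auto simp: g_zero)
    qed
    finally show ?thesis .
  qed
  have indeq: "(u' = t - (s - u)) = (u' = t - s + u)" using us st by auto
  have "phi M a J T (a + s - u) i j u s u' t = (W * R) / (W * Hs)"
    using phi_eq[of "a + s - u" s u] EM EF by simp
  also have "\<dots> = R / Hs" using Wpos by simp
  also have "\<dots> = (if i = j \<and> u' = t - s + u then Ht / Hs else 0)
      + (\<Sum>k\<in>{1..D}. \<Sum>\<theta>\<in>{s+1..t-u'}.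
              qk Q (a + (s - u)) i k (s - u) \<theta> / Hs * phi M a J T (a + \<theta>) k j 0 \<theta> u' t)"
    unfolding sumeq R_def ind_def indeq by (simp add: add_divide_distrib)
  finally show ?thesis unfolding Hs_def Ht_def age .
qed

end

theorem proposition1:
  fixes M :: "'w measure" and D a :: nat
    and J T :: "nat \<Rightarrow> 'w \<Rightarrow> nat"
    and Q :: "nat \<Rightarrow> nat \<Rightarrow> nat \<Rightarrow> nat \<Rightarrow> nat \<Rightarrow> real"
    and i j u s u' t :: nat
  assumes P: "prob_space M"
    and measJ: "\<And>n. J n \<in> measurable M (count_space UNIV)"
    and measT: "\<And>n. T n \<in> measurable M (count_space UNIV)"
    and Jrange: "\<And>n \<omega>. \<omega> \<in> space M \<Longrightarrow> J n \<omega> \<in> {1..D}"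
    and T0: "\<And>\<omega>. \<omega> \<in> space M \<Longrightarrow> T 0 \<omega> = 0"
    and Tmono: "\<And>n \<omega>. \<omega> \<in> space M \<Longrightarrow> T n \<omega> < T (Suc n) \<omega>"
    and MRP: "\<And>n js ts k r.
       k \<in> {1..D} \<Longrightarrow>
       \<P>(\<omega> in M. \<forall>h\<le>n. J h \<omega> = js h \<and> T h \<omega> = ts h \<and> AA a T h \<omega> = a + ts h) > 0 \<Longrightarrow>
       cond_prob M (\<lambda>\<omega>. J (Suc n) \<omega> = k \<and> T (Suc n) \<omega> \<le> r)
                   (\<lambda>\<omega>. \<forall>h\<le>n. J h \<omega> = js h \<and> T h \<omega> = ts h \<and> AA a T h \<omega> = a + ts h)
         = Q (a + ts n) (js n) k (ts n) r"
    and ij: "i \<in> {1..D}" "j \<in> {1..D}"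
    and us: "u \<le> s" and st: "s \<le> t"
    and Hpos: "Hbar D Q (a + s - u) i (s - u) s > 0"
    and cpos: "\<P>(\<omega> in M. ZZ J T s \<omega> = i \<and> BB T s \<omega> = u \<and> AA a T (NN T s \<omega>) \<omega> = a + s - u) > 0"
  shows "phi M a J T (a + s - u) i j u s u' t =
           (if i = j \<and> u' = t - s + u
            then Hbar D Q (a + s - u) i (s - u) t / Hbar D Q (a + s - u) i (s - u) s else 0)
         + (\<Sum>k\<in>{1..D}. \<Sum>\<theta>\<in>{s+1..t-u'}.
              qk Q (a + s - u) i k (s - u) \<theta> / Hbar D Q (a + s - u) i (s - u) s
              * phi M a J T (a + \<theta>) k j 0 \<theta> u' t)"
proof -
  interpret mrp M D a J T Q j u' t
    apply (rule mrp.intro[OF P])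
    apply (rule mrp_axioms.intro)
         apply (rule measJ)
        apply (rule measT)
       apply (erule Jrange)
      apply (erule T0)
     apply (erule Tmono)
    apply (erule (1) MRP)
    done
  have "measure M (E s u i) > 0" using cpos unfolding E_def .
  then show ?thesis by (rule main[OF ij(1) us st Hpos])
qed

end
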